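(* Let $\{\mathcal H,\Gamma_0,\Gamma_1\}$ be a unitary boundary triple for $A^*$ with Weyl function $M(\cdot)$. Then the mapping $\Gamma_0$ (from $\mathfrak H^2$ to $\mathcal H$) is closable if and only if for some (equivalently, for every) $\lambda\in\mathbb C\setminus\mathbb R$ the following holds: whenever $h_n\in\operatorname{dom}M(\lambda)$, $h_n\to h$ in $\mathcal H$ and $\operatorname{Im}(M(\lambda)h_n,h_n)\to0$ as $n\to\infty$, then $h=0$.
   Context: $A$ is a closed symmetric relation in $\mathfrak H$. A unitary boundary triple for $A^*$: a linear operator $\Gamma=\{\Gamma_0,\Gamma_1\}$ from $\mathfrak H^2$ to $\mathcal H^2$ with $\operatorname{dom}\Gamma\subset A^*$ dense in $A^*$ such that $\Gamma^{-1}=\Gamma^{[*]}$, where $\Gamma^{[*]}=\{\{\{k,k'\},\{g,g'\}\}:(f',g)-(f,g')=(h',k)-(h,k')\text{ for all }\{\{f,f'\},\{h,h'\}\}\in\Gamma\}$. Weyl function: $M(\lambda)\Gamma_0\hat f_\lambda=\Gamma_1\hat f_\lambda$ for $\hat f_\lambda=\{f_\lambda,\lambda f_\lambda\}\in\operatorname{dom}\Gamma$. Closable means that the closure of the graph of $\Gamma_0$ in $\mathfrak H^2\times\mathcal H$ is the graph of an operator. *)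

theory Defs
  imports "HOL-Analysis.Analysis"
begin

class complex_vector = real_vector +
  fixes scaleC :: "complex \<Rightarrow> 'a \<Rightarrow> 'a"
  assumes scaleC_add_right: "scaleC a (x + y) = scaleC a x + scaleC a y"
    and scaleC_add_left: "scaleC (a + b) x = scaleC a x + scaleC b x"
    and scaleC_scaleC: "scaleC a (scaleC b x) = scaleC (a * b) x"
    and scaleC_one: "scaleC 1 x = x"
    and scaleR_scaleC: "scaleR r x = scaleC (complex_of_real r) x"

instantiation prod :: (complex_vector, complex_vector) complex_vector
begin
definition scaleC_prod :: "complex \<Rightarrow> 'a \<times> 'b \<Rightarrow> 'a \<times> 'b" where
  "scaleC_prod c x = (scaleC c (fst x), scaleC c (snd x))"
instance
  by standard (simp_all add: scaleC_prod_def scaleC_add_right scaleC_add_left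
      scaleC_scaleC scaleR_prod_def scaleR_scaleC scaleC_one prod_eq_iff)
end

class complex_inner = complex_vector + real_normed_vector +
  fixes cinner :: "'a \<Rightarrow> 'a \<Rightarrow> complex"
  assumes cinner_commute: "cinner x y = cnj (cinner y x)"
    and cinner_add_left: "cinner (x + y) z = cinner x z + cinner y z"
    and cinner_scaleC_left: "cinner (scaleC c x) y = c * cinner x y"
    and cinner_self_norm: "cinner x x = complex_of_real ((norm x)\<^sup>2)"

class chilbert_space = complex_inner + complete_space

definition csubspace :: "'a::complex_vector set \<Rightarrow> bool" where
  "csubspace S \<longleftrightarrow> 0 \<in> S \<and> (\<forall>x\<in>S. \<forall>y\<in>S. x + y \<in> S) \<and> (\<forall>c. \<forall>x\<in>S. scaleC c x \<in> S)"

definition is_operator :: "('a \<times> 'b) set \<Rightarrow> bool" where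
  "is_operator R \<longleftrightarrow> (\<forall>x y z. (x, y) \<in> R \<longrightarrow> (x, z) \<in> R \<longrightarrow> y = z)"

definition adjoint_rel :: "('h::complex_inner \<times> 'h) set \<Rightarrow> ('h \<times> 'h) set" where
  "adjoint_rel A = {(g, g'). \<forall>(f, f') \<in> A. cinner f' g = cinner f g'}"

definition closed_symmetric_rel :: "('h::complex_inner \<times> 'h) set \<Rightarrow> bool" where
  "closed_symmetric_rel A \<longleftrightarrow> csubspace A \<and> closed A \<and> A \<subseteq> adjoint_rel A"

text \<open>The Krein-space adjoint \<open>\<Gamma>\<^sup>[*]\<close> of a relation from \<open>\<frak>H\<^sup>2\<close> to \<open>\<H>\<^sup>2\<close>.\<close>
definition bt_adjoint ::
  "(('h::complex_inner \<times> 'h) \<times> ('k::complex_inner \<times> 'k)) set \<Rightarrow> (('k \<times> 'k) \<times> ('h \<times> 'h)) set" where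
  "bt_adjoint \<Gamma> = {((k, k'), (g, g')).
     \<forall>((f, f'), (h, h')) \<in> \<Gamma>. cinner f' g - cinner f g' = cinner h' k - cinner h k'}"

definition unitary_boundary_triple ::
  "('h::complex_inner \<times> 'h) set \<Rightarrow> (('h \<times> 'h) \<times> ('k::complex_inner \<times> 'k)) set \<Rightarrow> bool" where
  "unitary_boundary_triple A \<Gamma> \<longleftrightarrow>
     csubspace \<Gamma> \<and> is_operator \<Gamma> \<and>
     Domain \<Gamma> \<subseteq> adjoint_rel A \<and> adjoint_rel A \<subseteq> closure (Domain \<Gamma>) \<and>
     converse \<Gamma> = bt_adjoint \<Gamma>"

definition Gamma0 :: "(('h \<times> 'h) \<times> ('k \<times> 'k)) set \<Rightarrow> (('h \<times> 'h) \<times> 'k) set" where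
  "Gamma0 \<Gamma> = {(fh, h). \<exists>h'. (fh, (h, h')) \<in> \<Gamma>}"

definition closable :: "('a::topological_space \<times> 'b::topological_space) set \<Rightarrow> bool" where
  "closable R \<longleftrightarrow> is_operator (closure R)"

text \<open>Weyl function \<open>M(\<lambda>)\<close> as the relation
  \<open>{(\<Gamma>\<^sub>0 f\<^sub>\<lambda>, \<Gamma>\<^sub>1 f\<^sub>\<lambda>) : f\<^sub>\<lambda> = {f, \<lambda> f} \<in> dom \<Gamma>}\<close>.\<close>
definition weyl_rel :: "(('h::complex_vector \<times> 'h) \<times> ('k \<times> 'k)) set \<Rightarrow> complex \<Rightarrow> ('k \<times> 'k) set" where
  "weyl_rel \<Gamma> z = {(h, h'). \<exists>f. ((f, scaleC z f), (h, h')) \<in> \<Gamma>}"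

end

theory Submission
  imports Defs
begin


lemma scaleC_minus1: "scaleC (-1) (x::'a::complex_vector) = - x"
  using scaleR_scaleC[of "-1" x] by simp

lemma scaleC_zero_right: "scaleC c (0::'a::complex_vector) = 0"
  using scaleC_add_right[of c 0 0] by simp

lemma scaleC_zero_left: "scaleC 0 (x::'a::complex_vector) = 0"
  using scaleR_scaleC[of 0 x] by simp

lemma scaleC_minus_right: "scaleC c (- x::'a::complex_vector) = - scaleC c x"
proof -
  have "scaleC c (- x) = scaleC c (scaleC (-1) x)" by (simp add: scaleC_minus1)
  also have "\<dots> = scaleC (-1) (scaleC c x)" by (simp add: scaleC_scaleC)
  finally show ?thesis by (simp add: scaleC_minus1)
qed

lemma scaleC_diff_right: "scaleC c (x - y::'a::complex_vector) = scaleC c x - scaleC c y"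
  by (simp only: diff_conv_add_uminus scaleC_add_right scaleC_minus_right)

lemma scaleC_diff_left: "scaleC (a - b) (x::'a::complex_vector) = scaleC a x - scaleC b x"
proof -
  have "scaleC (a - b) x + scaleC b x = scaleC a x" by (simp flip: scaleC_add_left)
  then show ?thesis by (simp add: eq_diff_eq)
qed


lemma cinner_zero_left[simp]:
  fixes x y z :: "'a::complex_inner"
  shows "cinner 0 y = 0"
  using cinner_add_left[of 0 0 y] by simp

lemma cinner_zero_right[simp]:
  fixes x y z :: "'a::complex_inner"
  shows "cinner x 0 = 0"
  using cinner_commute[of x 0] by simp

lemma cinner_minus_left:
  fixes x y z :: "'a::complex_inner"
  shows "cinner (- x) y = - cinner x y"
  using cinner_scaleC_left[of "-1" x y] scaleC_minus1[of x] by simp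

lemma cinner_diff_left:
  fixes x y z :: "'a::complex_inner"
  shows "cinner (x - y) z = cinner x z - cinner y z"
  by (simp only: diff_conv_add_uminus cinner_add_left cinner_minus_left)

lemma cinner_add_right:
  fixes x y z :: "'a::complex_inner"
  shows "cinner x (y + z) = cinner x y + cinner x z"
  by (subst (1 2 3) cinner_commute) (simp add: cinner_add_left)

lemma cinner_scaleC_right:
  fixes x y z :: "'a::complex_inner"
  shows "cinner x (scaleC c y) = cnj c * cinner x y"
  by (subst (1 2) cinner_commute) (simp add: cinner_scaleC_left)

lemma cinner_minus_right:
  fixes x y z :: "'a::complex_inner"
  shows "cinner x (- y) = - cinner x y"
  by (subst (1 2) cinner_commute) (simp add: cinner_minus_left)

lemma cinner_diff_right:
  fixes x y z :: "'a::complex_inner"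
  shows "cinner x (y - z) = cinner x y - cinner x z"
  by (simp only: diff_conv_add_uminus cinner_add_right cinner_minus_right)

lemma cinner_scaleR_left:
  fixes x y z :: "'a::complex_inner"
  shows "cinner (scaleR r x) y = complex_of_real r * cinner x y"
  by (simp add: scaleR_scaleC cinner_scaleC_left)

lemma cinner_scaleR_right:
  fixes x y z :: "'a::complex_inner"
  shows "cinner x (scaleR r y) = complex_of_real r * cinner x y"
  by (simp add: scaleR_scaleC cinner_scaleC_right)

lemma cinner_self_Re:
  fixes x y z :: "'a::complex_inner"
  shows "Re (cinner x x) = (norm x)\<^sup>2"
  by (simp add: cinner_self_norm)

lemma cinner_self_Im:
  fixes x y z :: "'a::complex_inner"
  shows "Im (cinner x x) = 0"
  by (simp add: cinner_self_norm)

lemma cinner_eq_zero_iff: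
  fixes x y z :: "'a::complex_inner"
  shows "cinner x x = 0 \<longleftrightarrow> x = 0"
  by (simp add: cinner_self_norm)

lemma norm_scaleC:
  fixes x :: "'a::complex_inner"
  shows "norm (scaleC c x) = cmod c * norm x"
proof -
  have "(norm (scaleC c x))\<^sup>2 = Re (cinner (scaleC c x) (scaleC c x))" by (simp add: cinner_self_Re)
  also have "cinner (scaleC c x) (scaleC c x) = c * cnj c * cinner x x"
    by (simp add: cinner_scaleC_left cinner_scaleC_right mult.assoc)
  also have "c * cnj c * cinner x x = complex_of_real ((cmod c)\<^sup>2 * (norm x)\<^sup>2)"
    by (simp add: cinner_self_norm flip: complex_norm_square)
  finally have "(norm (scaleC c x))\<^sup>2 = (cmod c * norm x)\<^sup>2" by (simp add: power_mult_distrib)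
  then show ?thesis by (simp add: power2_eq_iff_nonneg)
qed

lemma cauchy_schwarz:
  fixes x y :: "'a::complex_inner"
  shows "cmod (cinner x y) \<le> norm x * norm y"
proof (cases "y = 0")
  case True then show ?thesis by simp
next
  case False
  define Y where "Y = (norm y)\<^sup>2"
  have Y: "Y > 0" using False by (simp add: Y_def)
  define a where "a = cinner x y"
  define t where "t = a / complex_of_real Y"
  have e: "cinner (x - scaleC t y) (x - scaleC t y)
       = cinner x x - cnj t * cinner x y - t * cinner y x + t * cnj t * cinner y y"
    by (simp add: cinner_diff_left cinner_diff_right cinner_scaleC_left cinner_scaleC_right algebra_simps)
  have yx: "cinner y x = cnj a" unfolding a_def by (rule cinner_commute)
  have yy: "cinner y y = complex_of_real Y" by (simp add: Y_def cinner_self_norm)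
  have aa: "a * cnj a = complex_of_real ((cmod a)\<^sup>2)" by (rule complex_norm_square[symmetric])
  have "- cnj t * cinner x y - t * cinner y x + t * cnj t * cinner y y
      = - (a * cnj a) / complex_of_real Y"
    using Y unfolding yx yy t_def a_def[symmetric] by (simp add: field_simps)
  also have "\<dots> = - complex_of_real ((cmod a)\<^sup>2 / Y)" by (simp add: aa)
  finally have e2: "cinner (x - scaleC t y) (x - scaleC t y) = complex_of_real ((norm x)\<^sup>2 - (cmod a)\<^sup>2 / Y)"
    unfolding e by (simp add: cinner_self_norm diff_diff_eq2 algebra_simps)
  have "0 \<le> Re (cinner (x - scaleC t y) (x - scaleC t y))" by (simp add: cinner_self_Re)
  then have "(cmod a)\<^sup>2 / Y \<le> (norm x)\<^sup>2" unfolding e2 by simp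
  then have "(cmod a)\<^sup>2 \<le> (norm x)\<^sup>2 * (norm y)\<^sup>2" using Y by (simp add: Y_def field_simps)
  then have "(cmod a)\<^sup>2 \<le> (norm x * norm y)\<^sup>2" by (simp add: power_mult_distrib)
  then show ?thesis unfolding a_def by (simp add: abs_le_square_iff)
qed

lemma bounded_bilinear_cinner: "bounded_bilinear (cinner :: 'a::complex_inner \<Rightarrow> 'a \<Rightarrow> complex)"
  apply unfold_locales
      apply (rule cinner_add_left)
     apply (rule cinner_add_right)
    apply (simp add: cinner_scaleR_left scaleR_conv_of_real)
   apply (simp add: cinner_scaleR_right scaleR_conv_of_real)
  apply (rule exI[of _ 1]) apply (simp add: cauchy_schwarz)
  done

lemma parallelogram:
  fixes x y :: "'a::complex_inner"
  shows "(norm (x + y))\<^sup>2 + (norm (x - y))\<^sup>2 = 2 * (norm x)\<^sup>2 + 2 * (norm y)\<^sup>2"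
proof -
  have "cinner (x + y) (x + y) + cinner (x - y) (x - y) = 2 * cinner x x + 2 * cinner y y"
    unfolding cinner_add_left cinner_add_right cinner_diff_left cinner_diff_right
    by (simp add: cinner_commute[of y x])
  then have "complex_of_real ((norm (x + y))\<^sup>2 + (norm (x - y))\<^sup>2) = complex_of_real (2 * (norm x)\<^sup>2 + 2 * (norm y)\<^sup>2)"
    unfolding cinner_self_norm of_real_add of_real_mult by simp
  then show ?thesis by (simp only: of_real_eq_iff)
qed

lemma tendsto_cinner[tendsto_intros]:
  "(f \<longlongrightarrow> a) F \<Longrightarrow> (g \<longlongrightarrow> b) F \<Longrightarrow> ((\<lambda>x. cinner (f x) (g x)) \<longlongrightarrow> cinner a b) F"
  by (rule bounded_bilinear.tendsto[OF bounded_bilinear_cinner])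

lemma bounded_linear_scaleC: "bounded_linear (\<lambda>x::'a::complex_inner. scaleC c x)"
  apply unfold_locales
    apply (rule scaleC_add_right)
   apply (simp add: scaleR_scaleC scaleC_scaleC mult.commute)
  apply (rule exI[of _ "cmod c"]) apply (simp add: norm_scaleC)
  done

lemma tendsto_scaleC[tendsto_intros]:
  "(f \<longlongrightarrow> a) F \<Longrightarrow> ((\<lambda>x. scaleC c (f x :: 'a::complex_inner)) \<longlongrightarrow> scaleC c a) F"
  by (rule bounded_linear.tendsto[OF bounded_linear_scaleC])



instantiation prod :: (complex_inner, complex_inner) complex_inner
begin
definition cinner_prod_def: "cinner x y = cinner (fst x) (fst y) + cinner (snd x) (snd y)"
instance
proof
  fix x y z :: "'a \<times> 'b" and c :: complex
  show "cinner x y = cnj (cinner y x)" unfolding cinner_prod_def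
    by (simp flip: cinner_commute)
  show "cinner (x + y) z = cinner x z + cinner y z" unfolding cinner_prod_def
    by (simp add: cinner_add_left)
  show "cinner (scaleC c x) y = c * cinner x y" unfolding cinner_prod_def scaleC_prod_def
    by (simp add: cinner_scaleC_left algebra_simps)
  show "cinner x x = complex_of_real ((norm x)\<^sup>2)" unfolding cinner_prod_def norm_prod_def
    by (simp add: cinner_self_norm)
qed
end

instance prod :: (chilbert_space, chilbert_space) chilbert_space ..

lemma cinner_Pair: "cinner (a, b) (c, d) = cinner a c + cinner b d"
  by (simp add: cinner_prod_def)

lemma scaleC_Pair: "scaleC c (a, b) = (scaleC c a, scaleC c b)"
  by (simp add: scaleC_prod_def)

lemma csubspace_diff: "csubspace S \<Longrightarrow> x \<in> S \<Longrightarrow> y \<in> S \<Longrightarrow> x - y \<in> S"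
  unfolding csubspace_def by (metis diff_conv_add_uminus scaleC_minus1)

lemma csubspace_add: "csubspace S \<Longrightarrow> x \<in> S \<Longrightarrow> y \<in> S \<Longrightarrow> x + y \<in> S"
  unfolding csubspace_def by blast

lemma csubspace_scaleC: "csubspace S \<Longrightarrow> x \<in> S \<Longrightarrow> scaleC c x \<in> S"
  unfolding csubspace_def by blast

lemma csubspace_0: "csubspace S \<Longrightarrow> 0 \<in> S"
  unfolding csubspace_def by blast

lemma csubspace_scaleR: "csubspace S \<Longrightarrow> x \<in> S \<Longrightarrow> scaleR r x \<in> S"
  unfolding csubspace_def scaleR_scaleC by blast

lemma nearest_point:
  fixes S :: "'a::chilbert_space set"
  assumes S: "csubspace S" "closed S"
  shows "\<exists>p\<in>S. \<forall>s\<in>S. norm (x - p) \<le> norm (x - s)"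
proof -
  define d where "d = infdist x S"
  have ne: "S \<noteq> {}" using csubspace_0[OF S(1)] by blast
  have d0: "d \<ge> 0" by (simp add: d_def infdist_nonneg)
  have ex: "\<exists>s. s \<in> S \<and> dist x s < sqrt (d\<^sup>2 + 1 / Suc n)" for n
  proof -
    have lt: "d < sqrt (d\<^sup>2 + 1 / Suc n)" by (rule real_less_rsqrt) simp
    have eq: "infdist x S = (INF a\<in>S. dist x a)" by (rule infdist_notempty[OF ne])
    have bdd: "bdd_below ((\<lambda>a. dist x a) ` S)" by (rule bdd_belowI2[of _ 0]) simp
    have "(INF a\<in>S. dist x a) < sqrt (d\<^sup>2 + 1 / Suc n)" using lt unfolding d_def eq .
    then obtain a where "a \<in> S" "dist x a < sqrt (d\<^sup>2 + 1 / Suc n)"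
      using cINF_less_iff[OF ne bdd] by blast
    then show ?thesis by blast
  qed
  obtain s where s': "\<forall>n. s n \<in> S \<and> dist x (s n) < sqrt (d\<^sup>2 + 1 / Suc n)"
    using choice[of "\<lambda>n s. s \<in> S \<and> dist x s < sqrt (d\<^sup>2 + 1 / Suc n)"] ex by blast
  have s: "\<And>n. s n \<in> S" "\<And>n. dist x (s n) < sqrt (d\<^sup>2 + 1 / Suc n)" using s' by auto
  have dle: "d \<le> norm (x - y)" if "y \<in> S" for y
    using infdist_le[OF that, of x] by (simp add: d_def dist_norm)
  have sq: "(norm (x - s n))\<^sup>2 < d\<^sup>2 + 1 / Suc n" for n
  proof -
    have a: "norm (x - s n) < sqrt (d\<^sup>2 + 1 / Suc n)" using s(2)[of n] by (simp add: dist_norm)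
    have "(norm (x - s n))\<^sup>2 < (sqrt (d\<^sup>2 + 1 / Suc n))\<^sup>2" using a by (intro power_strict_mono) auto
    then show ?thesis by simp
  qed
  have cs: "(norm (s m - s n))\<^sup>2 \<le> 2 / Suc m + 2 / Suc n" for m n
  proof -
    have mid: "scaleR (1/2) (s m + s n) \<in> S"
      using S(1) s(1) by (intro csubspace_scaleR csubspace_add) auto
    have "d \<le> norm (x - scaleR (1/2) (s m + s n))" by (rule dle[OF mid])
    then have "d\<^sup>2 \<le> (norm (x - scaleR (1/2) (s m + s n)))\<^sup>2" using d0 by (simp add: power_mono)
    also have "x - scaleR (1/2) (s m + s n) = scaleR (1/2) ((x - s m) + (x - s n))"
      by (simp add: algebra_simps) (simp flip: scaleR_add_left)
    finally have "4 * d\<^sup>2 \<le> (norm ((x - s m) + (x - s n)))\<^sup>2"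
      by (simp add: power_mult_distrib power2_eq_square)
    moreover have "(norm ((x - s m) + (x - s n)))\<^sup>2 + (norm ((x - s m) - (x - s n)))\<^sup>2
        = 2 * (norm (x - s m))\<^sup>2 + 2 * (norm (x - s n))\<^sup>2" by (rule parallelogram)
    moreover have "(x - s m) - (x - s n) = s n - s m" by simp
    moreover have "norm (s n - s m) = norm (s m - s n)" by (rule norm_minus_commute)
    ultimately have "4 * d\<^sup>2 + (norm (s m - s n))\<^sup>2 \<le> 2 * (norm (x - s m))\<^sup>2 + 2 * (norm (x - s n))\<^sup>2"
      by simp
    then show ?thesis using sq[of m] sq[of n] by linarith
  qed
  have "Cauchy s"
  proof (rule metric_CauchyI)
    fix e :: real assume e: "e > 0"
    obtain M :: nat where M: "4 / e\<^sup>2 < M" using reals_Archimedean2 by blast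
    have "dist (s m) (s n) < e" if "m \<ge> M" "n \<ge> M" for m n
    proof -
      have "2 / Suc m \<le> 2 / Suc M" "2 / Suc n \<le> 2 / Suc M" using that by (auto simp: divide_simps)
      then have "(norm (s m - s n))\<^sup>2 \<le> 4 / Suc M" using cs[of m n] by simp
      also have "\<dots> < e\<^sup>2" using M e by (simp add: divide_simps mult.commute) (smt (verit) mult_nonneg_nonneg of_nat_0_le_iff zero_le_power2 distrib_right mult_1)
      finally have "(norm (s m - s n))\<^sup>2 < e\<^sup>2" .
      then show ?thesis using e by (simp add: dist_norm power_less_imp_less_base)
    qed
    then show "\<exists>M. \<forall>m\<ge>M. \<forall>n\<ge>M. dist (s m) (s n) < e" by blast
  qed
  then obtain p where p: "s \<longlonglongrightarrow> p" using Cauchy_convergent_iff convergent_def by blast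
  have pS: "p \<in> S" using closed_sequentially[OF S(2)] s(1) p by blast
  have "(\<lambda>n. (norm (x - s n))\<^sup>2) \<longlonglongrightarrow> (norm (x - p))\<^sup>2" using p by (intro tendsto_intros)
  moreover have "(\<lambda>n. d\<^sup>2 + 1 / Suc n) \<longlonglongrightarrow> d\<^sup>2 + 0"
    by (intro tendsto_intros LIMSEQ_Suc[OF lim_inverse_n'[unfolded inverse_eq_divide]])
  ultimately have "(norm (x - p))\<^sup>2 \<le> d\<^sup>2 + 0"
    using sq by (intro LIMSEQ_le[of _ _ "\<lambda>n. d\<^sup>2 + 1 / Suc n"]) (auto intro: less_imp_le)
  then have "norm (x - p) \<le> d" using d0 by (simp add: power2_le_iff_abs_le)
  then show ?thesis using pS dle by (meson order_trans)
qed


lemma closed_csubspace_all: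
  fixes S :: "'a::chilbert_space set"
  assumes S: "csubspace S" "closed S" and orth: "\<And>w. (\<forall>s\<in>S. cinner s w = 0) \<Longrightarrow> w = 0"
  shows "x \<in> S"
proof -
  obtain p where pS: "p \<in> S" and pmin: "\<And>s. s \<in> S \<Longrightarrow> norm (x - p) \<le> norm (x - s)"
    using nearest_point[OF S, of x] by blast
  define w where "w = x - p"
  have "cinner s w = 0" if sS: "s \<in> S" for s
  proof (rule ccontr)
    assume ne: "cinner s w \<noteq> 0"
    define a where "a = cinner w s"
    have a0: "a \<noteq> 0" using ne unfolding a_def by (metis cinner_commute complex_cnj_zero)
    define \<epsilon> where "\<epsilon> = 1 / ((norm s)\<^sup>2 + 1)"
    have \<epsilon>0: "\<epsilon> > 0" unfolding \<epsilon>_def by (intro divide_pos_pos) (auto intro: add_nonneg_pos)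
    have \<epsilon>s: "\<epsilon> * (norm s)\<^sup>2 < 1"
      unfolding \<epsilon>_def by (simp add: divide_simps add_nonneg_pos)
    define t where "t = complex_of_real \<epsilon> * a"
    have "p + scaleC t s \<in> S" using S(1) pS sS by (intro csubspace_add csubspace_scaleC)
    then have "norm w \<le> norm (w - scaleC t s)" using pmin unfolding w_def by (metis diff_diff_eq)
    then have le: "(norm w)\<^sup>2 \<le> (norm (w - scaleC t s))\<^sup>2" by (simp add: power_mono)
    have e: "cinner (w - scaleC t s) (w - scaleC t s)
       = cinner w w - cnj t * cinner w s - t * cinner s w + t * cnj t * cinner s s"
      by (simp add: cinner_diff_left cinner_diff_right cinner_scaleC_left cinner_scaleC_right algebra_simps)
    have sw: "cinner s w = cnj a" unfolding a_def by (rule cinner_commute)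
    have aa: "a * cnj a = complex_of_real ((cmod a)\<^sup>2)" by (rule complex_norm_square[symmetric])
    have aa2: "a * cnj a = (complex_of_real (cmod a))\<^sup>2" by (simp add: aa)
    have aa3: "cnj a * a = (complex_of_real (cmod a))\<^sup>2" by (simp add: aa2 mult.commute)
    have f1: "cnj t * a = complex_of_real (\<epsilon> * (cmod a)\<^sup>2)"
      unfolding t_def by (simp add: aa2 aa3 mult.assoc)
    have f2: "t * cnj a = complex_of_real (\<epsilon> * (cmod a)\<^sup>2)"
      unfolding t_def by (simp add: aa2 aa3 mult.assoc)
    have f3: "t * cnj t * cinner s s = complex_of_real (\<epsilon>\<^sup>2 * (cmod a)\<^sup>2 * (norm s)\<^sup>2)"
      unfolding t_def cinner_self_norm by (simp add: power2_eq_square mult_ac) (simp add: aa2[unfolded power2_eq_square] flip: mult.assoc)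
    have "cinner (w - scaleC t s) (w - scaleC t s) =
        complex_of_real ((norm w)\<^sup>2 - 2 * \<epsilon> * (cmod a)\<^sup>2 + \<epsilon>\<^sup>2 * (cmod a)\<^sup>2 * (norm s)\<^sup>2)"
      unfolding e sw a_def[symmetric] f1 f2 f3 by (simp add: cinner_self_norm del: of_real_power)
    then have "(norm (w - scaleC t s))\<^sup>2 = (norm w)\<^sup>2 - 2 * \<epsilon> * (cmod a)\<^sup>2 + \<epsilon>\<^sup>2 * (cmod a)\<^sup>2 * (norm s)\<^sup>2"
      unfolding cinner_self_norm of_real_eq_iff .
    with le have "0 \<le> \<epsilon> * (cmod a)\<^sup>2 * (\<epsilon> * (norm s)\<^sup>2 - 2)"
      by (simp add: algebra_simps power2_eq_square)
    moreover have "\<epsilon> * (cmod a)\<^sup>2 > 0" using \<epsilon>0 a0 by simp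
    moreover have "\<epsilon> * (norm s)\<^sup>2 - 2 < 0" using \<epsilon>s by simp
    ultimately show False using mult_pos_neg[of "\<epsilon> * (cmod a)\<^sup>2" "\<epsilon> * (norm s)\<^sup>2 - 2"] by linarith
  qed
  then have "w = 0" by (intro orth) blast
  then show ?thesis using pS by (simp add: w_def)
qed



lemma green:
  fixes G :: "(('h::complex_inner \<times> 'h) \<times> ('k::complex_inner \<times> 'k)) set"
  assumes U: "converse G = bt_adjoint G"
    and "((f, f'), (h, h')) \<in> G" "((g, g'), (k, k')) \<in> G"
  shows "cinner f' g - cinner f g' = cinner h' k - cinner h k'"
proof -
  have "((k, k'), (g, g')) \<in> bt_adjoint G" using assms(3) U by blast
  then show ?thesis using assms(2) unfolding bt_adjoint_def by fastforce
qed

lemma green_intro: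
  fixes G :: "(('h::complex_inner \<times> 'h) \<times> ('k::complex_inner \<times> 'k)) set"
  assumes U: "converse G = bt_adjoint G"
    and H: "\<And>f f' h h'. ((f, f'), (h, h')) \<in> G \<Longrightarrow> cinner f' g - cinner f g' = cinner h' k - cinner h k'"
  shows "((g, g'), (k, k')) \<in> G"
proof -
  have "((k, k'), (g, g')) \<in> bt_adjoint G" unfolding bt_adjoint_def using H by fastforce
  then show ?thesis using U by blast
qed

lemma green_closed:
  fixes G :: "(('h::complex_inner \<times> 'h) \<times> ('k::complex_inner \<times> 'k)) set"
  assumes U: "converse G = bt_adjoint G"
  shows "closed G"
proof (rule closed_sequential_limits[THEN iffD2], intro allI impI, elim conjE)
  fix x :: "nat \<Rightarrow> ('h \<times> 'h) \<times> ('k \<times> 'k)" and l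
  assume xG: "\<forall>n. x n \<in> G" and xl: "x \<longlonglongrightarrow> l"
  obtain g g' k k' where l: "l = ((g, g'), (k, k'))" by (metis prod.collapse)
  define a where "a n = fst (fst (x n))" for n
  define a' where "a' n = snd (fst (x n))" for n
  define b where "b n = fst (snd (x n))" for n
  define b' where "b' n = snd (snd (x n))" for n
  have xe: "x n = ((a n, a' n), (b n, b' n))" for n by (simp add: a_def a'_def b_def b'_def)
  have la: "a \<longlonglongrightarrow> g" "a' \<longlonglongrightarrow> g'" "b \<longlonglongrightarrow> k" "b' \<longlonglongrightarrow> k'"
    unfolding a_def a'_def b_def b'_def
    using tendsto_fst[OF tendsto_fst[OF xl]] tendsto_snd[OF tendsto_fst[OF xl]]
      tendsto_fst[OF tendsto_snd[OF xl]] tendsto_snd[OF tendsto_snd[OF xl]] l by simp_all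
  show "l \<in> G" unfolding l
  proof (rule green_intro[OF U])
    fix f f' h h' assume fh: "((f, f'), (h, h')) \<in> G"
    have eq: "cinner f' (a n) - cinner f (a' n) = cinner h' (b n) - cinner h (b' n)" for n
      using green[OF U fh, of "a n" "a' n" "b n" "b' n"] xG xe by metis
    have "(\<lambda>n. cinner f' (a n) - cinner f (a' n)) \<longlonglongrightarrow> cinner f' g - cinner f g'"
      using la by (intro tendsto_intros)
    moreover have "(\<lambda>n. cinner h' (b n) - cinner h (b' n)) \<longlonglongrightarrow> cinner h' k - cinner h k'"
      using la by (intro tendsto_intros)
    ultimately show "cinner f' g - cinner f g' = cinner h' k - cinner h k'"
      unfolding eq using LIMSEQ_unique by blast
  qed
qed

lemma green_self_Im:
  fixes G :: "(('h::complex_inner \<times> 'h) \<times> ('k::complex_inner \<times> 'k)) set"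
  assumes U: "converse G = bt_adjoint G" and e: "((f, f'), (h, h')) \<in> G"
  shows "Im (cinner f' f) = Im (cinner h' h)"
proof -
  have "cinner f' f - cinner f f' = cinner h' h - cinner h h'" by (rule green[OF U e e])
  then have "cinner f' f - cnj (cinner f' f) = cinner h' h - cnj (cinner h' h)"
    by (metis cinner_commute)
  then have "Im (cinner f' f - cnj (cinner f' f)) = Im (cinner h' h - cnj (cinner h' h))" by simp
  then show ?thesis by simp
qed

lemma green_weyl_Im:
  fixes G :: "(('h::complex_inner \<times> 'h) \<times> ('k::complex_inner \<times> 'k)) set"
  assumes U: "converse G = bt_adjoint G" and e: "((f, scaleC z f), (h, h')) \<in> G"
  shows "Im (cinner h' h) = Im z * (norm f)\<^sup>2"
proof -
  have "Im (cinner h' h) = Im (cinner (scaleC z f) f)" using green_self_Im[OF U e] by simp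
  also have "\<dots> = Im z * (norm f)\<^sup>2" by (simp add: cinner_scaleC_left cinner_self_norm)
  finally show ?thesis .
qed


lemma fst_scaleC[simp]: "fst (scaleC c x) = scaleC c (fst x)" by (simp add: scaleC_prod_def)
lemma snd_scaleC[simp]: "snd (scaleC c x) = scaleC c (snd x)" by (simp add: scaleC_prod_def)

lemma weyl_bound:
  fixes G :: "(('h::complex_inner \<times> 'h) \<times> ('k::complex_inner \<times> 'k)) set"
  assumes U: "converse G = bt_adjoint G" and e: "((f, f'), (h, h')) \<in> G"
  shows "\<bar>Im z\<bar> * norm (f, h) \<le> norm (f' - scaleC z f, - h' - scaleC z h)"
proof -
  define X where "X = (f, h)"
  define Y where "Y = (f' - scaleC z f, - h' - scaleC z h)"
  have "cinner Y X = (cinner f' f - cinner h' h) - z * cinner X X"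
    unfolding X_def Y_def cinner_Pair
    by (simp add: cinner_diff_left cinner_minus_left cinner_scaleC_left cinner_add_left algebra_simps)
  then have "Im (cinner Y X) = - Im z * (norm X)\<^sup>2"
    using green_self_Im[OF U e] by (simp add: cinner_self_norm)
  then have "\<bar>Im z\<bar> * (norm X)\<^sup>2 = \<bar>Im (cinner Y X)\<bar>" by (simp add: abs_mult)
  also have "\<dots> \<le> cmod (cinner Y X)" by (rule abs_Im_le_cmod)
  also have "\<dots> \<le> norm Y * norm X" by (rule cauchy_schwarz)
  finally have *: "\<bar>Im z\<bar> * norm X * norm X \<le> norm Y * norm X" by (simp add: power2_eq_square mult.assoc)
  show ?thesis
  proof (cases "norm X = 0")
    case True then show ?thesis unfolding X_def Y_def by simp
  next
    case False then have "norm X > 0" by simp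
    with * have "\<bar>Im z\<bar> * norm X \<le> norm Y" by (simp add: mult_le_cancel_right)
    then show ?thesis unfolding X_def Y_def .
  qed
qed



lemma resolvent_surj:
  fixes G :: "(('h::chilbert_space \<times> 'h) \<times> ('k::chilbert_space \<times> 'k)) set"
  assumes G: "csubspace G" and U: "converse G = bt_adjoint G" and z: "Im z \<noteq> 0"
  shows "\<exists>f f' h h'. ((f, f'), (h, h')) \<in> G \<and> f' - scaleC z f = u \<and> - h' - scaleC z h = v"
proof -
  define L :: "('h \<times> 'h) \<times> ('k \<times> 'k) \<Rightarrow> 'h \<times> 'k" where
    "L e = (snd (fst e) - scaleC z (fst (fst e)), - snd (snd e) - scaleC z (fst (snd e)))" for e
  define X :: "('h \<times> 'h) \<times> ('k \<times> 'k) \<Rightarrow> 'h \<times> 'k" where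
    "X e = (fst (fst e), fst (snd e))" for e
  define R :: "'h \<times> 'k \<Rightarrow> 'h \<times> 'k \<Rightarrow> ('h \<times> 'h) \<times> ('k \<times> 'k)" where
    "R x y = ((fst x, fst y + scaleC z (fst x)), (snd x, - snd y - scaleC z (snd x)))" for x y
  have Rrec: "R (X e) (L e) = e" for e
    unfolding R_def X_def L_def by (simp add: prod_eq_iff)
  have LR: "L (R x y) = y" for x y
    unfolding R_def L_def by (simp add: prod_eq_iff)
  have Lsub: "L (a - b) = L a - L b" for a b
    unfolding L_def by (simp add: prod_eq_iff scaleC_diff_right algebra_simps)
  have Lsc: "L (scaleC c a) = scaleC c (L a)" for c a
    unfolding L_def by (simp add: scaleC_Pair scaleC_diff_right scaleC_minus_right scaleC_scaleC mult.commute)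
  have Ladd: "L (a + b) = L a + L b" for a b
    unfolding L_def by (simp add: prod_eq_iff scaleC_add_right algebra_simps)
  have Xsub: "X (a - b) = X a - X b" for a b unfolding X_def by simp
  have bnd: "\<bar>Im z\<bar> * norm (X e) \<le> norm (L e)" if "e \<in> G" for e
  proof -
    obtain f f' h h' where e: "e = ((f, f'), (h, h'))" by (metis prod.collapse)
    show ?thesis using weyl_bound[OF U that[unfolded e], of z] unfolding e X_def L_def by simp
  qed
  have zpos: "\<bar>Im z\<bar> > 0" using z by simp
  define S where "S = L ` G"
  have cS: "csubspace S" unfolding csubspace_def S_def
  proof (intro conjI ballI allI)
    have "L 0 = 0" unfolding L_def by (simp add: scaleC_zero_right zero_prod_def)
    then show "0 \<in> L ` G" using csubspace_0[OF G] by (metis image_eqI)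
    show "x + y \<in> L ` G" if hx: "x \<in> L ` G" "y \<in> L ` G" for x y
    proof -
      obtain a b where "a \<in> G" "b \<in> G" "x = L a" "y = L b" using hx by blast
      then show ?thesis using csubspace_add[OF G, of a b] Ladd[of a b] by (metis image_eqI)
    qed
    show "scaleC c x \<in> L ` G" if hx: "x \<in> L ` G" for c x
    proof -
      obtain a where "a \<in> G" "x = L a" using hx by blast
      then show ?thesis using csubspace_scaleC[OF G, of a c] Lsc[of c a] by (metis image_eqI)
    qed
  qed
  have Gc: "closed G" by (rule green_closed[OF U])
  have clS: "closed S"
  proof (rule closed_sequential_limits[THEN iffD2], intro allI impI, elim conjE)
    fix y :: "nat \<Rightarrow> 'h \<times> 'k" and l
    assume yS: "\<forall>n. y n \<in> S" and yl: "y \<longlonglongrightarrow> l"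
    have "\<forall>n. \<exists>e. e \<in> G \<and> L e = y n" using yS unfolding S_def by (metis imageE)
    then obtain e where e: "\<forall>n. e n \<in> G \<and> L (e n) = y n"
      using choice[of "\<lambda>n e. e \<in> G \<and> L e = y n"] by blast
    have "Cauchy (\<lambda>n. X (e n))"
    proof (rule metric_CauchyI)
      fix r :: real assume r: "r > 0"
      have "Cauchy y" using yl by (rule LIMSEQ_imp_Cauchy)
      then obtain M where M: "\<forall>m\<ge>M. \<forall>n\<ge>M. dist (y m) (y n) < r * \<bar>Im z\<bar>"
        using r zpos metric_CauchyD[of y "r * \<bar>Im z\<bar>"] by auto
      have "dist (X (e m)) (X (e n)) < r" if "m \<ge> M" "n \<ge> M" for m n
      proof -
        have "e m - e n \<in> G" using e csubspace_diff[OF G] by blast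
        then have "\<bar>Im z\<bar> * norm (X (e m - e n)) \<le> norm (L (e m - e n))" by (rule bnd)
        also have "\<dots> = dist (y m) (y n)" using e by (simp add: Lsub dist_norm)
        also have "\<dots> < r * \<bar>Im z\<bar>" using M that by blast
        finally have "norm (X (e m - e n)) < r" using zpos by (simp add: mult.commute)
        then show ?thesis by (simp add: Xsub dist_norm)
      qed
      then show "\<exists>M. \<forall>m\<ge>M. \<forall>n\<ge>M. dist (X (e m)) (X (e n)) < r" by blast
    qed
    then obtain p where p: "(\<lambda>n. X (e n)) \<longlonglongrightarrow> p" using Cauchy_convergent_iff convergent_def by blast
    have "(\<lambda>n. R (X (e n)) (L (e n))) \<longlonglongrightarrow> R p l"
      unfolding R_def using p yl e by (auto intro!: tendsto_intros)
    then have "e \<longlonglongrightarrow> R p l" unfolding Rrec .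
    then have "R p l \<in> G" using closed_sequentially[OF Gc] e by blast
    then show "l \<in> S" unfolding S_def using LR by (metis image_eqI)
  qed
  have orth: "w = 0" if w: "\<forall>s\<in>S. cinner s w = 0" for w
  proof -
    obtain g k where wg: "w = (g, k)" by (metis prod.collapse)
    have mem: "((g, scaleC (cnj z) g), (k, - scaleC (cnj z) k)) \<in> G"
    proof (rule green_intro[OF U])
      fix f f' h h' assume fh: "((f, f'), (h, h')) \<in> G"
      have "cinner (L ((f, f'), (h, h'))) w = 0" using w fh unfolding S_def by blast
      then have "cinner f' g - z * cinner f g - cinner h' k - z * cinner h k = 0"
        unfolding L_def wg cinner_Pair
        by (simp add: cinner_diff_left cinner_minus_left cinner_scaleC_left algebra_simps)
      then show "cinner f' g - cinner f (scaleC (cnj z) g) = cinner h' k - cinner h (- scaleC (cnj z) k)"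
        by (simp add: cinner_scaleC_right cinner_minus_right algebra_simps)
    qed
    have "cinner (scaleC (cnj z) g) g - cinner g (scaleC (cnj z) g)
        = cinner (- scaleC (cnj z) k) k - cinner k (- scaleC (cnj z) k)"
      by (rule green[OF U mem mem])
    then have "(cnj z - z) * complex_of_real ((norm g)\<^sup>2 + (norm k)\<^sup>2) = 0"
      by (simp add: cinner_scaleC_left cinner_scaleC_right cinner_minus_left cinner_minus_right
          cinner_self_norm algebra_simps)
    moreover have "cnj z - z \<noteq> 0"
    proof
      assume "cnj z - z = 0"
      then have "Im (cnj z - z) = 0" by simp
      then show False using z by simp
    qed
    ultimately have "complex_of_real ((norm g)\<^sup>2 + (norm k)\<^sup>2) = 0" by (simp del: of_real_add of_real_power)
    then have "(norm g)\<^sup>2 + (norm k)\<^sup>2 = 0" by (simp only: of_real_eq_0_iff)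
    then show ?thesis unfolding wg by (simp add: add_nonneg_eq_0_iff zero_prod_def)
  qed
  have "(u, v) \<in> S" by (rule closed_csubspace_all[OF cS clS orth])
  then obtain e where Le': "(u, v) = L e" and eG: "e \<in> G" unfolding S_def by (rule imageE)
  note Le = Le'[symmetric]
  obtain f f' h h' where e: "e = ((f, f'), (h, h'))" by (metis prod.collapse)
  have 1: "f' - scaleC z f = u" "- h' - scaleC z h = v" using Le unfolding e L_def by simp_all
  have 2: "((f, f'), (h, h')) \<in> G" using eG unfolding e .
  show ?thesis using 1 2 by (intro exI[of _ f] exI[of _ f'] exI[of _ h] exI[of _ h'] conjI)
qed



lemma Gamma0_diff:
  assumes G: "csubspace G" and "(x1, y1) \<in> Gamma0 G" "(x2, y2) \<in> Gamma0 G"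
  shows "(x1 - x2, y1 - y2) \<in> Gamma0 G"
proof -
  obtain a b where "(x1, (y1, a)) \<in> G" "(x2, (y2, b)) \<in> G" using assms(2,3) unfolding Gamma0_def by blast
  then have "(x1, (y1, a)) - (x2, (y2, b)) \<in> G" by (rule csubspace_diff[OF G])
  then show ?thesis unfolding Gamma0_def by auto
qed

lemma Gamma0_zero: "csubspace G \<Longrightarrow> (0, 0) \<in> Gamma0 G"
  unfolding Gamma0_def using csubspace_0[of G] by (auto simp: zero_prod_def)

lemma closable_seq:
  fixes G :: "(('h::complex_inner \<times> 'h) \<times> ('k::complex_inner \<times> 'k)) set"
  assumes G: "csubspace G"
  shows "closable (Gamma0 G) \<longleftrightarrow>
    (\<forall>(x :: nat \<Rightarrow> 'h \<times> 'h) y y0. (\<forall>n. (x n, y n) \<in> Gamma0 G) \<and> x \<longlonglongrightarrow> 0 \<and> y \<longlonglongrightarrow> y0 \<longrightarrow> y0 = 0)"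
proof
  assume c: "closable (Gamma0 G)"
  show "\<forall>(x :: nat \<Rightarrow> 'h \<times> 'h) y y0. (\<forall>n. (x n, y n) \<in> Gamma0 G) \<and> x \<longlonglongrightarrow> 0 \<and> y \<longlonglongrightarrow> y0 \<longrightarrow> y0 = 0"
  proof (intro allI impI, elim conjE)
    fix x :: "nat \<Rightarrow> 'h \<times> 'h" and y y0
    assume xy: "\<forall>n. (x n, y n) \<in> Gamma0 G" and x0: "x \<longlonglongrightarrow> 0" and yl: "y \<longlonglongrightarrow> y0"
    have "(\<lambda>n. (x n, y n)) \<longlonglongrightarrow> (0, y0)" using x0 yl by (rule tendsto_Pair)
    then have "(0, y0) \<in> closure (Gamma0 G)" unfolding closure_sequential using xy
      by (intro exI[of _ "\<lambda>n. (x n, y n)"]) simp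
    moreover have "(0, 0) \<in> closure (Gamma0 G)" using Gamma0_zero[OF G] closure_subset by blast
    ultimately show "y0 = 0" using c unfolding closable_def is_operator_def by (elim allE impE) auto
  qed
next
  assume H: "\<forall>(x :: nat \<Rightarrow> 'h \<times> 'h) y y0. (\<forall>n. (x n, y n) \<in> Gamma0 G) \<and> x \<longlonglongrightarrow> 0 \<and> y \<longlonglongrightarrow> y0 \<longrightarrow> y0 = 0"
  show "closable (Gamma0 G)" unfolding closable_def is_operator_def
  proof (intro allI impI)
    fix a b c assume ab: "(a, b) \<in> closure (Gamma0 G)" and ac: "(a, c) \<in> closure (Gamma0 G)"
    obtain p where p: "\<forall>n. p n \<in> Gamma0 G" "p \<longlonglongrightarrow> (a, b)" using ab unfolding closure_sequential by blast
    obtain q where q: "\<forall>n. q n \<in> Gamma0 G" "q \<longlonglongrightarrow> (a, c)" using ac unfolding closure_sequential by blast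
    have d: "(fst (p n) - fst (q n), snd (p n) - snd (q n)) \<in> Gamma0 G" for n
      using Gamma0_diff[OF G, of "fst (p n)" "snd (p n)" "fst (q n)" "snd (q n)"] p(1) q(1) by simp
    have "(\<lambda>n. fst (p n) - fst (q n)) \<longlonglongrightarrow> a - a"
      using p(2) q(2) by (intro tendsto_intros) (auto dest: tendsto_fst)
    then have x0: "(\<lambda>n. fst (p n) - fst (q n)) \<longlonglongrightarrow> 0" by simp
    have yl: "(\<lambda>n. snd (p n) - snd (q n)) \<longlonglongrightarrow> b - c"
      using tendsto_snd[OF p(2)] tendsto_snd[OF q(2)] by (intro tendsto_intros) auto
    have "b - c = 0" using H[rule_format, OF conjI[OF allI[OF d] conjI[OF x0 yl]]] .
    then show "b = c" by simp
  qed
qed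



lemma closable_imp_P:
  fixes G :: "(('h::chilbert_space \<times> 'h) \<times> ('k::chilbert_space \<times> 'k)) set"
  assumes G: "csubspace G" and U: "converse G = bt_adjoint G" and z: "Im z \<noteq> 0"
    and c: "closable (Gamma0 G)"
  shows "\<forall>(h :: nat \<Rightarrow> 'k) h' h0. (\<forall>n. (h n, h' n) \<in> weyl_rel G z) \<and> h \<longlonglongrightarrow> h0 \<and>
                   (\<lambda>n. Im (cinner (h' n) (h n))) \<longlonglongrightarrow> 0 \<longrightarrow> h0 = 0"
proof (intro allI impI, elim conjE)
  fix h :: "nat \<Rightarrow> 'k" and h' h0
  assume w: "\<forall>n. (h n, h' n) \<in> weyl_rel G z" and hl: "h \<longlonglongrightarrow> h0"
    and im: "(\<lambda>n. Im (cinner (h' n) (h n))) \<longlonglongrightarrow> 0"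
  have "\<forall>n. \<exists>f. ((f, scaleC z f), (h n, h' n)) \<in> G" using w unfolding weyl_rel_def by blast
  then obtain f where f: "\<forall>n. ((f n, scaleC z (f n)), (h n, h' n)) \<in> G"
    using choice[of "\<lambda>n f. ((f, scaleC z f), (h n, h' n)) \<in> G"] by blast
  have eq: "(norm (f n))\<^sup>2 = Im (cinner (h' n) (h n)) / Im z" for n
    using green_weyl_Im[OF U f[rule_format, of n]] z by simp
  have "(\<lambda>n. Im (cinner (h' n) (h n)) / Im z) \<longlonglongrightarrow> 0 / Im z" using im z by (intro tendsto_intros)
  then have "(\<lambda>n. (norm (f n))\<^sup>2) \<longlonglongrightarrow> 0" unfolding eq by simp
  then have "(\<lambda>n. sqrt ((norm (f n))\<^sup>2)) \<longlonglongrightarrow> sqrt 0" by (rule tendsto_real_sqrt)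
  then have "(\<lambda>n. norm (f n)) \<longlonglongrightarrow> 0" by simp
  then have f0: "f \<longlonglongrightarrow> 0" by (simp add: tendsto_norm_zero_iff)
  have "(\<lambda>n. (f n, scaleC z (f n))) \<longlonglongrightarrow> (0, scaleC z 0)" using f0 by (intro tendsto_intros)
  then have x0: "(\<lambda>n. (f n, scaleC z (f n))) \<longlonglongrightarrow> 0" by (simp add: scaleC_zero_right zero_prod_def)
  have mem: "\<forall>n. ((f n, scaleC z (f n)), h n) \<in> Gamma0 G" using f unfolding Gamma0_def by blast
  show "h0 = 0" using c[unfolded closable_seq[OF G], rule_format, OF conjI[OF mem conjI[OF x0 hl]]] .
qed

lemma P_imp_closable:
  fixes G :: "(('h::chilbert_space \<times> 'h) \<times> ('k::chilbert_space \<times> 'k)) set"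
  assumes G: "csubspace G" and U: "converse G = bt_adjoint G" and z: "Im z \<noteq> 0"
    and P: "\<forall>(h :: nat \<Rightarrow> 'k) h' h0. (\<forall>n. (h n, h' n) \<in> weyl_rel G z) \<and> h \<longlonglongrightarrow> h0 \<and>
                   (\<lambda>n. Im (cinner (h' n) (h n))) \<longlonglongrightarrow> 0 \<longrightarrow> h0 = 0"
  shows "closable (Gamma0 G)"
  unfolding closable_seq[OF G]
proof (intro allI impI, elim conjE)
  fix x :: "nat \<Rightarrow> 'h \<times> 'h" and y y0
  assume xy: "\<forall>n. (x n, y n) \<in> Gamma0 G" and x0: "x \<longlonglongrightarrow> 0" and yl: "y \<longlonglongrightarrow> y0"
  have "\<forall>n. \<exists>y'. (x n, (y n, y')) \<in> G" using xy unfolding Gamma0_def by blast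
  then obtain y' where y': "\<forall>n. (x n, (y n, y' n)) \<in> G"
    using choice[of "\<lambda>n y'. (x n, (y n, y')) \<in> G"] by blast
  define f where "f n = fst (x n)" for n
  define f' where "f' n = snd (x n)" for n
  define u where "u n = f' n - scaleC z (f n)" for n
  have l1: "f \<longlonglongrightarrow> fst 0" unfolding f_def using tendsto_fst[OF x0] by simp
  have l2: "f' \<longlonglongrightarrow> snd 0" unfolding f'_def using tendsto_snd[OF x0] by simp
  have u0: "u \<longlonglongrightarrow> 0"
  proof -
    have "(\<lambda>n. f' n - scaleC z (f n)) \<longlonglongrightarrow> snd 0 - scaleC z (fst 0)"
      by (intro tendsto_intros l1 l2)
    then show ?thesis unfolding u_def by (simp add: scaleC_zero_right)
  qed
  have "\<forall>n. \<exists>p. ((fst (fst p), snd (fst p)), (fst (snd p), snd (snd p))) \<in> G \<and>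
      snd (fst p) - scaleC z (fst (fst p)) = u n \<and> - snd (snd p) - scaleC z (fst (snd p)) = 0"
  proof
    fix n
    obtain a a' b b' where "((a, a'), (b, b')) \<in> G" "a' - scaleC z a = u n" "- b' - scaleC z b = 0"
      using resolvent_surj[OF G U z, of "u n" 0] by blast
    then show "\<exists>p. ((fst (fst p), snd (fst p)), (fst (snd p), snd (snd p))) \<in> G \<and>
      snd (fst p) - scaleC z (fst (fst p)) = u n \<and> - snd (snd p) - scaleC z (fst (snd p)) = 0"
      by (intro exI[of _ "((a, a'), (b, b'))"]) simp
  qed
  then obtain p where p: "\<forall>n. ((fst (fst (p n)), snd (fst (p n))), (fst (snd (p n)), snd (snd (p n)))) \<in> G \<and>
      snd (fst (p n)) - scaleC z (fst (fst (p n))) = u n \<and> - snd (snd (p n)) - scaleC z (fst (snd (p n))) = 0"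
    using choice[of "\<lambda>n p. ((fst (fst p), snd (fst p)), (fst (snd p), snd (snd p))) \<in> G \<and>
      snd (fst p) - scaleC z (fst (fst p)) = u n \<and> - snd (snd p) - scaleC z (fst (snd p)) = 0"] by blast
  define a where "a n = fst (fst (p n))" for n
  define a' where "a' n = snd (fst (p n))" for n
  define b where "b n = fst (snd (p n))" for n
  define b' where "b' n = snd (snd (p n))" for n
  have pG: "((a n, a' n), (b n, b' n)) \<in> G" and pa: "a' n - scaleC z (a n) = u n"
    and pb: "- b' n - scaleC z (b n) = 0" for n
    using p unfolding a_def a'_def b_def b'_def by auto
  have zpos: "\<bar>Im z\<bar> > 0" using z by simp
  have bnd: "norm (a n, b n) \<le> norm (u n) / \<bar>Im z\<bar>" for n
  proof -
    have "\<bar>Im z\<bar> * norm (a n, b n) \<le> norm (a' n - scaleC z (a n), - b' n - scaleC z (b n))"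
      by (rule weyl_bound[OF U pG])
    also have "\<dots> = norm (u n)" using pa pb by (simp add: zero_prod_def norm_Pair)
    finally have "norm (a n, b n) * \<bar>Im z\<bar> \<le> norm (u n)" by (simp only: mult.commute)
    then show ?thesis by (simp only: pos_le_divide_eq[OF zpos])
  qed
  have "(\<lambda>n. norm (u n) / \<bar>Im z\<bar>) \<longlonglongrightarrow> 0 / \<bar>Im z\<bar>"
    using u0 z by (intro tendsto_intros) (simp_all add: tendsto_norm_zero_iff)
  then have "(\<lambda>n. norm (u n) / \<bar>Im z\<bar>) \<longlonglongrightarrow> 0" by simp
  then have ab0: "(\<lambda>n. (a n, b n)) \<longlonglongrightarrow> 0"
    by (rule Lim_null_comparison[OF always_eventually[OF allI[OF bnd]]])
  have a0: "a \<longlonglongrightarrow> 0" using tendsto_fst[OF ab0] by simp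
  have b0: "b \<longlonglongrightarrow> 0" using tendsto_snd[OF ab0] by simp
  have xe: "x n = (f n, f' n)" for n by (simp add: f_def f'_def)
  have dG: "((f n, f' n), (y n, y' n)) - ((a n, a' n), (b n, b' n)) \<in> G" for n
    using csubspace_diff[OF G y'[rule_format, of n, unfolded xe] pG] .
  have fd: "f' n - a' n = scaleC z (f n - a n)" for n
  proof -
    have "f' n = u n + scaleC z (f n)" by (simp add: u_def)
    moreover have "a' n = u n + scaleC z (a n)" using pa[of n] by (simp add: algebra_simps)
    ultimately show ?thesis by (simp add: scaleC_diff_right)
  qed
  have wG: "((f n - a n, scaleC z (f n - a n)), (y n - b n, y' n - b' n)) \<in> G" for n
    using dG[of n] unfolding fd[symmetric] by simp
  have W: "\<forall>n. (y n - b n, y' n - b' n) \<in> weyl_rel G z" unfolding weyl_rel_def using wG by blast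
  have ylim: "(\<lambda>n. y n - b n) \<longlonglongrightarrow> y0 - 0" using yl b0 by (intro tendsto_intros)
  have imeq: "Im (cinner (y' n - b' n) (y n - b n)) = Im z * (norm (f n - a n))\<^sup>2" for n
    by (rule green_weyl_Im[OF U wG])
  have "(\<lambda>n. f n - a n) \<longlonglongrightarrow> fst 0 - 0"
    by (intro tendsto_intros l1 a0)
  then have fa0: "(\<lambda>n. f n - a n) \<longlonglongrightarrow> 0" by simp
  have "(\<lambda>n. Im z * (norm (f n - a n))\<^sup>2) \<longlonglongrightarrow> Im z * (norm (0::'h))\<^sup>2"
    using tendsto_norm[OF fa0] by (intro tendsto_mult tendsto_const tendsto_power)
  then have imlim: "(\<lambda>n. Im (cinner (y' n - b' n) (y n - b n))) \<longlonglongrightarrow> 0" unfolding imeq by simp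
  show "y0 = 0" using P[rule_format, OF conjI[OF W conjI[OF ylim[simplified] imlim]]] .
qed

theorem mainTheorem9:
  fixes A :: "('h::chilbert_space \<times> 'h) set"
    and \<Gamma> :: "(('h \<times> 'h) \<times> ('k::chilbert_space \<times> 'k)) set"
  assumes "closed_symmetric_rel A"
    and "unitary_boundary_triple A \<Gamma>"
  shows "(closable (Gamma0 \<Gamma>) \<longleftrightarrow>
            (\<exists>z. Im z \<noteq> 0 \<and>
               (\<forall>(h :: nat \<Rightarrow> 'k) h' h0. (\<forall>n. (h n, h' n) \<in> weyl_rel \<Gamma> z) \<and> h \<longlonglongrightarrow> h0 \<and>
                   (\<lambda>n. Im (cinner (h' n) (h n))) \<longlonglongrightarrow> 0 \<longrightarrow> h0 = 0)))
       \<and> (closable (Gamma0 \<Gamma>) \<longleftrightarrow>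
            (\<forall>z. Im z \<noteq> 0 \<longrightarrow>
               (\<forall>(h :: nat \<Rightarrow> 'k) h' h0. (\<forall>n. (h n, h' n) \<in> weyl_rel \<Gamma> z) \<and> h \<longlonglongrightarrow> h0 \<and>
                   (\<lambda>n. Im (cinner (h' n) (h n))) \<longlonglongrightarrow> 0 \<longrightarrow> h0 = 0)))"
proof -
  have G: "csubspace \<Gamma>" and U: "converse \<Gamma> = bt_adjoint \<Gamma>"
    using assms(2) unfolding unitary_boundary_triple_def by auto
  have i: "Im \<i> \<noteq> 0" by simp
  show ?thesis
  proof (intro conjI iffI)
    assume c: "closable (Gamma0 \<Gamma>)"
    show "\<exists>z. Im z \<noteq> 0 \<and>
               (\<forall>(h :: nat \<Rightarrow> 'k) h' h0. (\<forall>n. (h n, h' n) \<in> weyl_rel \<Gamma> z) \<and> h \<longlonglongrightarrow> h0 \<and>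
                   (\<lambda>n. Im (cinner (h' n) (h n))) \<longlonglongrightarrow> 0 \<longrightarrow> h0 = 0)"
      using closable_imp_P[OF G U i c] i by blast
  next
    assume "\<exists>z. Im z \<noteq> 0 \<and>
               (\<forall>(h :: nat \<Rightarrow> 'k) h' h0. (\<forall>n. (h n, h' n) \<in> weyl_rel \<Gamma> z) \<and> h \<longlonglongrightarrow> h0 \<and>
                   (\<lambda>n. Im (cinner (h' n) (h n))) \<longlonglongrightarrow> 0 \<longrightarrow> h0 = 0)"
    then obtain z where z: "Im z \<noteq> 0" and P: "\<forall>(h :: nat \<Rightarrow> 'k) h' h0. (\<forall>n. (h n, h' n) \<in> weyl_rel \<Gamma> z) \<and> h \<longlonglongrightarrow> h0 \<and>
                   (\<lambda>n. Im (cinner (h' n) (h n))) \<longlonglongrightarrow> 0 \<longrightarrow> h0 = 0" by blast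
    show "closable (Gamma0 \<Gamma>)" by (rule P_imp_closable[OF G U z P])
  next
    assume c: "closable (Gamma0 \<Gamma>)"
    show "\<forall>z. Im z \<noteq> 0 \<longrightarrow>
               (\<forall>(h :: nat \<Rightarrow> 'k) h' h0. (\<forall>n. (h n, h' n) \<in> weyl_rel \<Gamma> z) \<and> h \<longlonglongrightarrow> h0 \<and>
                   (\<lambda>n. Im (cinner (h' n) (h n))) \<longlonglongrightarrow> 0 \<longrightarrow> h0 = 0)"
      using closable_imp_P[OF G U _ c] by blast
  next
    assume "\<forall>z. Im z \<noteq> 0 \<longrightarrow>
               (\<forall>(h :: nat \<Rightarrow> 'k) h' h0. (\<forall>n. (h n, h' n) \<in> weyl_rel \<Gamma> z) \<and> h \<longlonglongrightarrow> h0 \<and>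
                   (\<lambda>n. Im (cinner (h' n) (h n))) \<longlonglongrightarrow> 0 \<longrightarrow> h0 = 0)"
    then have P: "\<forall>(h :: nat \<Rightarrow> 'k) h' h0. (\<forall>n. (h n, h' n) \<in> weyl_rel \<Gamma> \<i>) \<and> h \<longlonglongrightarrow> h0 \<and>
                   (\<lambda>n. Im (cinner (h' n) (h n))) \<longlonglongrightarrow> 0 \<longrightarrow> h0 = 0" using i by blast
    show "closable (Gamma0 \<Gamma>)" by (rule P_imp_closable[OF G U i P])
  qed
qed

end
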